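(* Let $G=(V,E,L)$ be a hypergraph with loops, $L=L^-\cup L^+$, and let $G'=(V,E,L^+)$ be obtained by removing all minus loops. Then $$\mathrm{PP}(G)=\Big\{z\in\mathbb{R}^{V\cup E\cup L}: (z_p)_{p\in V\cup E\cup L^+}\in\mathrm{PP}(G'),\ z_{ii}\le z_i,\ z_i\in[0,1]\ \forall\{i,i\}\in L^-\Big\}.$$
   Context: A hypergraph with loops is $G=(V,E,L)$: $V$ a finite node set, $E$ a set of subsets of $V$ of cardinality at least two, $L$ a set of loops $\{i,i\}$, $i\in V$, partitioned as $L=L^-\cup L^+$ (minus/plus loops). $\mathrm{PP}(G):=\mathrm{conv}\{z\in\mathbb{R}^{V\cup E\cup L}: z_{ii}\ge z_i^2\ \forall\{i,i\}\in L^+,\ z_{ii}\le z_i^2\ \forall \{i,i\}\in L^-,\ z_e=\prod_{i\in e}z_i\ \forall e\in E,\ z_i\in[0,1]\ \forall i\in V\}$. *)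

theory Defs
  imports "HOL-Analysis.Analysis" "HOL-Library.Function_Algebras"
begin

text \<open>Real-valued functions on an arbitrary index type form a real vector space
  (pointwise operations), so that the library's convex hull applies to them.\<close>

instantiation "fun" :: (type, real_vector) real_vector
begin
definition scaleR_fun :: "real \<Rightarrow> ('a \<Rightarrow> 'b) \<Rightarrow> 'a \<Rightarrow> 'b" where
  "scaleR_fun r f = (\<lambda>x. r *\<^sub>R f x)"
instance
  by standard (auto simp: scaleR_fun_def fun_eq_iff scaleR_add_right scaleR_add_left)
end

text \<open>Coordinates of R^(V \<union> E \<union> L): a node i, an edge e, or a loop {i,i}
  (identified with its node i).\<close>
datatype 'v coord = Nd 'v | Ed "'v set" | Lp 'v

definition coords :: "'v set \<Rightarrow> 'v set set \<Rightarrow> 'v set \<Rightarrow> 'v coord set" where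
  "coords V E L = Nd ` V \<union> Ed ` E \<union> Lp ` L"

definition hypergraph_loops :: "'v set \<Rightarrow> 'v set set \<Rightarrow> 'v set \<Rightarrow> 'v set \<Rightarrow> bool" where
  "hypergraph_loops V E Lminus Lplus \<longleftrightarrow>
     finite V \<and> (\<forall>e\<in>E. e \<subseteq> V \<and> card e \<ge> 2) \<and>
     Lminus \<subseteq> V \<and> Lplus \<subseteq> V \<and> Lminus \<inter> Lplus = {}"

text \<open>Points of R^(V \<union> E \<union> L) are functions coord \<Rightarrow> real vanishing outside the
  coordinate set.\<close>
definition PP_points :: "'v set \<Rightarrow> 'v set set \<Rightarrow> 'v set \<Rightarrow> 'v set \<Rightarrow> ('v coord \<Rightarrow> real) set" where
  "PP_points V E Lminus Lplus =
     {z. (\<forall>p. p \<notin> coords V E (Lminus \<union> Lplus) \<longrightarrow> z p = 0) \<and>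
         (\<forall>i\<in>Lplus. z (Lp i) \<ge> (z (Nd i))\<^sup>2) \<and>
         (\<forall>i\<in>Lminus. z (Lp i) \<le> (z (Nd i))\<^sup>2) \<and>
         (\<forall>e\<in>E. z (Ed e) = (\<Prod>i\<in>e. z (Nd i))) \<and>
         (\<forall>i\<in>V. 0 \<le> z (Nd i) \<and> z (Nd i) \<le> 1)}"

definition PP :: "'v set \<Rightarrow> 'v set set \<Rightarrow> 'v set \<Rightarrow> 'v set \<Rightarrow> ('v coord \<Rightarrow> real) set" where
  "PP V E Lminus Lplus = convex hull (PP_points V E Lminus Lplus)"

definition restrict_coords :: "'a set \<Rightarrow> ('a \<Rightarrow> real) \<Rightarrow> 'a \<Rightarrow> real" where
  "restrict_coords C z = (\<lambda>p. if p \<in> C then z p else 0)"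

end

theory Submission
  imports Defs
begin

lemma fun_ops: "(u::'a \<Rightarrow> real) + w = (\<lambda>p. u p + w p)" "r *\<^sub>R u = (\<lambda>p. r * u p)"
  by (auto simp: plus_fun_def scaleR_fun_def)

lemma prod_upd:
  assumes "finite e" "i \<in> e"
  shows "(\<Prod>j\<in>e. (x(i:=t)) j) = (t::real) * (\<Prod>j\<in>e-{i}. x j)"
  using assms by (simp add: prod.remove)

lemma prod_upd_if [simp]:
  assumes "finite e" "i \<in> e"
  shows "(\<Prod>j\<in>e. if j = i then t else x j) = (t::real) * (\<Prod>j\<in>e-{i}. x j)"
  using prod_upd[OF assms, of x t] by (simp add: fun_upd_def)

lemma prod_upd2:
  assumes "i \<notin> e"
  shows "(\<Prod>j\<in>e. (x(i:=t)) j) = (\<Prod>j\<in>e. x j)"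
  using assms by (intro prod.cong) auto

lemma prod_upd2_if [simp]:
  assumes "i \<notin> e"
  shows "(\<Prod>j\<in>e. if j = i then t else x j) = (\<Prod>j\<in>e. x j)"
  using assms by (intro prod.cong) auto

definition ptG :: "'v set \<Rightarrow> 'v set set \<Rightarrow> 'v set \<Rightarrow> ('v \<Rightarrow> real) \<Rightarrow> ('v \<Rightarrow> real) \<Rightarrow> 'v coord \<Rightarrow> real" where
  "ptG V E Lplus x l = (\<lambda>p. case p of Nd j \<Rightarrow> if j \<in> V then x j else 0
      | Ed e \<Rightarrow> if e \<in> E then (\<Prod>j\<in>e. x j) else 0
      | Lp j \<Rightarrow> if j \<in> Lplus then l j else 0)"

definition SM :: "'v set \<Rightarrow> 'v set set \<Rightarrow> 'v set \<Rightarrow> 'v set \<Rightarrow> ('v coord \<Rightarrow> real) set" where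
  "SM V E Lplus M = {w \<in> PP_points V E {} Lplus. \<forall>i\<in>M. w (Nd i) = 0 \<or> w (Nd i) = 1}"

lemma split_step:
  assumes hg: "hypergraph_loops V E Lminus Lplus" and i: "i \<in> V" "i \<notin> Lplus"
    and w: "w \<in> SM V E Lplus M"
  shows "w \<in> convex hull (SM V E Lplus (insert i M))"
proof -
  have fin: "finite V" and EV: "\<And>e. e \<in> E \<Longrightarrow> e \<subseteq> V" using hg
    unfolding hypergraph_loops_def by auto
  define x where "x = (\<lambda>j. w (Nd j))"
  define l where "l = (\<lambda>j. w (Lp j))"
  define t where "t = w (Nd i)"
  define w0 where "w0 = ptG V E Lplus (x(i:=0)) l"
  define w1 where "w1 = ptG V E Lplus (x(i:=1)) l"
  have wP: "w \<in> PP_points V E {} Lplus" and wM: "\<forall>j\<in>M. w (Nd j) = 0 \<or> w (Nd j) = 1"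
    using w unfolding SM_def by auto
  have t01: "0 \<le> t" "t \<le> 1" using wP i unfolding PP_points_def t_def by auto
  have wz: "\<And>p. p \<notin> coords V E Lplus \<Longrightarrow> w p = 0" using wP unfolding PP_points_def by auto
  have wpl: "\<And>j. j \<in> Lplus \<Longrightarrow> w (Lp j) \<ge> (w (Nd j))\<^sup>2" using wP unfolding PP_points_def by auto
  have wed: "\<And>e. e \<in> E \<Longrightarrow> w (Ed e) = (\<Prod>j\<in>e. w (Nd j))" using wP unfolding PP_points_def by auto
  have wnd: "\<And>j. j \<in> V \<Longrightarrow> 0 \<le> w (Nd j) \<and> w (Nd j) \<le> 1" using wP unfolding PP_points_def by auto
  have inS: "ptG V E Lplus (x(i:=s)) l \<in> SM V E Lplus (insert i M)" if s: "s = 0 \<or> s = 1" for s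
  proof -
    have "ptG V E Lplus (x(i:=s)) l p = 0" if "p \<notin> coords V E Lplus" for p
      using that by (cases p) (auto simp: ptG_def coords_def)
    moreover have "\<forall>j\<in>Lplus. ptG V E Lplus (x(i:=s)) l (Lp j) \<ge> (ptG V E Lplus (x(i:=s)) l (Nd j))\<^sup>2"
      using hg i wpl unfolding ptG_def hypergraph_loops_def x_def l_def by auto
    moreover have "\<forall>e\<in>E. ptG V E Lplus (x(i:=s)) l (Ed e) = (\<Prod>j\<in>e. ptG V E Lplus (x(i:=s)) l (Nd j))"
    proof
      fix e assume e: "e \<in> E"
      then have "e \<subseteq> V" using EV by auto
      then show "ptG V E Lplus (x(i:=s)) l (Ed e) = (\<Prod>j\<in>e. ptG V E Lplus (x(i:=s)) l (Nd j))"
        using e by (auto simp: ptG_def intro!: prod.cong)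
    qed
    moreover have "\<forall>j\<in>V. 0 \<le> ptG V E Lplus (x(i:=s)) l (Nd j) \<and> ptG V E Lplus (x(i:=s)) l (Nd j) \<le> 1"
      using s wnd by (auto simp: ptG_def x_def)
    moreover have "\<forall>j\<in>insert i M. ptG V E Lplus (x(i:=s)) l (Nd j) = 0 \<or> ptG V E Lplus (x(i:=s)) l (Nd j) = 1"
      using s wM i by (auto simp: ptG_def x_def)
    ultimately show ?thesis unfolding SM_def PP_points_def by auto
  qed
  have eq: "w = (1 - t) *\<^sub>R w0 + t *\<^sub>R w1"
  proof (rule ext)
    fix p show "w p = ((1 - t) *\<^sub>R w0 + t *\<^sub>R w1) p"
    proof (cases p)
      case (Nd j) then show ?thesis
        using wz[of p] i by (auto simp: fun_ops w0_def w1_def ptG_def x_def t_def coords_def algebra_simps)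
    next
      case (Lp j) then show ?thesis
        using wz[of p] by (auto simp: fun_ops w0_def w1_def ptG_def l_def coords_def algebra_simps)
    next
      case (Ed e)
      show ?thesis
      proof (cases "e \<in> E")
        case False then show ?thesis
          using wz[of p] Ed by (auto simp: fun_ops w0_def w1_def ptG_def coords_def)
      next
        case True
        have fe: "finite e" using EV[OF True] fin finite_subset by auto
        show ?thesis
        proof (cases "i \<in> e")
          case True': True
          have "w p = t * (\<Prod>j\<in>e-{i}. x j)"
            using wed[OF True] Ed fe True' by (simp add: prod.remove x_def t_def)
          then show ?thesis using Ed True fe True'
            by (simp add: fun_ops w0_def w1_def ptG_def prod_upd)
        next
          case False
          then show ?thesis using Ed True wed[OF True]
            by (simp add: fun_ops w0_def w1_def ptG_def prod_upd2 x_def algebra_simps)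
        qed
      qed
    qed
  qed
  show ?thesis unfolding eq
    by (rule convexD[OF convex_convex_hull]) (auto intro!: hull_inc inS simp: w0_def w1_def t01)
qed

lemma binarize:
  assumes hg: "hypergraph_loops V E Lminus Lplus" and M: "finite M" "M \<subseteq> V - Lplus"
  shows "PP_points V E {} Lplus \<subseteq> convex hull (SM V E Lplus M)"
  using M
proof (induction M rule: finite_induct)
  case empty
  then show ?case by (auto simp: SM_def intro: hull_inc)
next
  case (insert i M)
  have "SM V E Lplus M \<subseteq> convex hull (SM V E Lplus (insert i M))"
    using split_step[OF hg] insert.prems by auto
  then have "convex hull (SM V E Lplus M) \<subseteq> convex hull (SM V E Lplus (insert i M))"
    by (intro hull_minimal) auto
  then show ?case using insert by auto
qed

theorem lemma4:
  fixes V :: "'v set" and E :: "'v set set" and Lminus Lplus :: "'v set"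
  assumes "hypergraph_loops V E Lminus Lplus"
  shows "PP V E Lminus Lplus =
    {z. (\<forall>p. p \<notin> coords V E (Lminus \<union> Lplus) \<longrightarrow> z p = 0) \<and>
        restrict_coords (coords V E Lplus) z \<in> PP V E {} Lplus \<and>
        (\<forall>i\<in>Lminus. z (Lp i) \<le> z (Nd i) \<and> 0 \<le> z (Nd i) \<and> z (Nd i) \<le> 1)}"
  (is "_ = ?T")
proof
  show "PP V E Lminus Lplus \<subseteq> ?T"
    unfolding PP_def[of V E Lminus Lplus]
  proof (rule hull_minimal)
    show "PP_points V E Lminus Lplus \<subseteq> ?T"
    proof
      fix z assume z: "z \<in> PP_points V E Lminus Lplus"
      have LpV': "Lplus \<subseteq> V" and EV': "\<And>e. e \<in> E \<Longrightarrow> e \<subseteq> V"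
        using assms unfolding hypergraph_loops_def by auto
      have "restrict_coords (coords V E Lplus) z \<in> PP_points V E {} Lplus"
        using z LpV' EV' unfolding PP_points_def restrict_coords_def
        by (auto simp: coords_def subset_iff intro!: prod.cong)
      then have "restrict_coords (coords V E Lplus) z \<in> PP V E {} Lplus"
        unfolding PP_def by (rule hull_inc)
      moreover have "\<forall>i\<in>Lminus. z (Lp i) \<le> z (Nd i) \<and> 0 \<le> z (Nd i) \<and> z (Nd i) \<le> 1"
      proof
        fix i assume i: "i \<in> Lminus"
        then have iV: "i \<in> V" using assms unfolding hypergraph_loops_def by auto
        have a: "0 \<le> z (Nd i)" "z (Nd i) \<le> 1" "z (Lp i) \<le> (z (Nd i))\<^sup>2"
          using z i iV unfolding PP_points_def by auto
        have "(z (Nd i))\<^sup>2 \<le> z (Nd i)" using a by (simp add: power2_eq_square mult_left_le)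
        then show "z (Lp i) \<le> z (Nd i) \<and> 0 \<le> z (Nd i) \<and> z (Nd i) \<le> 1" using a by auto
      qed
      ultimately show "z \<in> ?T" using z unfolding PP_points_def by auto
    qed
  next
    show "convex ?T"
      unfolding convex_def
    proof (intro ballI allI impI)
      fix x y :: "'v coord \<Rightarrow> real" and u v :: real
      assume x: "x \<in> ?T" and y: "y \<in> ?T" and uv: "0 \<le> u" "0 \<le> v" "u + v = 1"
      have r: "restrict_coords (coords V E Lplus) (u *\<^sub>R x + v *\<^sub>R y) =
        u *\<^sub>R restrict_coords (coords V E Lplus) x + v *\<^sub>R restrict_coords (coords V E Lplus) y"
        by (auto simp: restrict_coords_def fun_ops)
      have "restrict_coords (coords V E Lplus) (u *\<^sub>R x + v *\<^sub>R y) \<in> PP V E {} Lplus"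
        unfolding r PP_def
        by (rule convexD[OF convex_convex_hull]) (use x y uv in \<open>auto simp: PP_def\<close>)
      moreover have "\<forall>i\<in>Lminus. (u *\<^sub>R x + v *\<^sub>R y) (Lp i) \<le> (u *\<^sub>R x + v *\<^sub>R y) (Nd i) \<and>
          0 \<le> (u *\<^sub>R x + v *\<^sub>R y) (Nd i) \<and> (u *\<^sub>R x + v *\<^sub>R y) (Nd i) \<le> 1"
      proof
        fix i assume i: "i \<in> Lminus"
        have xi: "x (Lp i) \<le> x (Nd i)" "0 \<le> x (Nd i)" "x (Nd i) \<le> 1" using x i by auto
        have yi: "y (Lp i) \<le> y (Nd i)" "0 \<le> y (Nd i)" "y (Nd i) \<le> 1" using y i by auto
        have "u * x (Lp i) + v * y (Lp i) \<le> u * x (Nd i) + v * y (Nd i)"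
          using xi yi uv by (intro add_mono mult_left_mono) auto
        moreover have "0 \<le> u * x (Nd i) + v * y (Nd i)" using xi yi uv by simp
        moreover have "u * x (Nd i) + v * y (Nd i) \<le> u * 1 + v * 1"
          using xi yi uv by (intro add_mono mult_left_mono) auto
        ultimately show "(u *\<^sub>R x + v *\<^sub>R y) (Lp i) \<le> (u *\<^sub>R x + v *\<^sub>R y) (Nd i) \<and>
          0 \<le> (u *\<^sub>R x + v *\<^sub>R y) (Nd i) \<and> (u *\<^sub>R x + v *\<^sub>R y) (Nd i) \<le> 1"
          using uv by (simp add: fun_ops)
      qed
      ultimately show "u *\<^sub>R x + v *\<^sub>R y \<in> ?T" using x y by (auto simp: fun_ops)
    qed
  qed
next
  show "?T \<subseteq> PP V E Lminus Lplus"
  proof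
    fix z assume z: "z \<in> ?T"
    have fin: "finite V" and LmV: "Lminus \<subseteq> V" and LpV: "Lplus \<subseteq> V"
      and disj: "Lminus \<inter> Lplus = {}"
      using assms unfolding hypergraph_loops_def by auto
    have finLm: "finite Lminus" using fin LmV finite_subset by auto
    define S where "S = SM V E Lplus Lminus"
    define y where "y = restrict_coords (coords V E Lplus) z"
    have "PP V E {} Lplus \<subseteq> convex hull S"
      unfolding PP_def S_def
      by (rule hull_minimal[OF binarize[OF assms finLm]]) (use LmV disj in auto)
    then have yS: "y \<in> convex hull S" using z y_def by auto
    define c where "c = (\<lambda>i. z (Nd i) - z (Lp i))"
    define g :: "('v coord \<Rightarrow> real) \<Rightarrow> 'v coord \<Rightarrow> real" where
      "g = (\<lambda>w p. w p + (case p of Lp i \<Rightarrow> if i \<in> Lminus then w (Nd i) else 0 | _ \<Rightarrow> 0))"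
    define a :: "'v coord \<Rightarrow> real" where
      "a = (\<lambda>p. case p of Lp i \<Rightarrow> if i \<in> Lminus then - c i else 0 | _ \<Rightarrow> 0)"
    have lin: "linear g"
    proof (rule linearI)
      fix b1 b2 :: "'v coord \<Rightarrow> real" show "g (b1 + b2) = g b1 + g b2"
        by (rule ext) (auto simp: g_def fun_ops split: coord.split)
    next
      fix r and b :: "'v coord \<Rightarrow> real" show "g (r *\<^sub>R b) = r *\<^sub>R g b"
        by (rule ext) (auto simp: g_def fun_ops algebra_simps split: coord.split)
    qed
    have fS: "(\<lambda>w. a + w) ` (g ` S) \<subseteq> PP_points V E Lminus Lplus"
    proof clarify
      fix w assume w: "w \<in> S"
      have wP: "w \<in> PP_points V E {} Lplus" and wM: "\<forall>j\<in>Lminus. w (Nd j) = 0 \<or> w (Nd j) = 1"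
        using w unfolding S_def SM_def by auto
      have wz: "\<And>p. p \<notin> coords V E Lplus \<Longrightarrow> w p = 0" using wP unfolding PP_points_def by auto
      have wpl: "\<And>j. j \<in> Lplus \<Longrightarrow> w (Lp j) \<ge> (w (Nd j))\<^sup>2" using wP unfolding PP_points_def by auto
      have wed: "\<And>e. e \<in> E \<Longrightarrow> w (Ed e) = (\<Prod>j\<in>e. w (Nd j))" using wP unfolding PP_points_def by auto
      have wnd: "\<And>j. j \<in> V \<Longrightarrow> 0 \<le> w (Nd j) \<and> w (Nd j) \<le> 1" using wP unfolding PP_points_def by auto
      let ?f = "a + g w"
      have "?f p = 0" if "p \<notin> coords V E (Lminus \<union> Lplus)" for p
        using that wz[of p] by (cases p) (auto simp: fun_ops a_def g_def coords_def)
      moreover have "\<forall>j\<in>Lplus. ?f (Lp j) \<ge> (?f (Nd j))\<^sup>2"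
        using wpl disj by (auto simp: fun_ops a_def g_def)
      moreover have "\<forall>j\<in>Lminus. ?f (Lp j) \<le> (?f (Nd j))\<^sup>2"
      proof
        fix j assume j: "j \<in> Lminus"
        have cj: "c j \<ge> 0" using z j unfolding c_def by auto
        have "w (Lp j) = 0" using wz[of "Lp j"] j disj by (auto simp: coords_def)
        moreover have "(w (Nd j))\<^sup>2 = w (Nd j)" using wM j by auto
        ultimately show "?f (Lp j) \<le> (?f (Nd j))\<^sup>2" using j cj by (auto simp: fun_ops a_def g_def)
      qed
      moreover have "\<forall>e\<in>E. ?f (Ed e) = (\<Prod>j\<in>e. ?f (Nd j))"
        using wed by (auto simp: fun_ops a_def g_def)
      moreover have "\<forall>j\<in>V. 0 \<le> ?f (Nd j) \<and> ?f (Nd j) \<le> 1"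
        using wnd by (auto simp: fun_ops a_def g_def)
      ultimately show "a + g w \<in> PP_points V E Lminus Lplus" unfolding PP_points_def by blast
    qed
    have zf: "z = a + g y"
    proof (rule ext)
      fix p show "z p = (a + g y) p"
      proof (cases p)
        case (Nd j) then show ?thesis
          using z by (auto simp: fun_ops a_def g_def y_def restrict_coords_def coords_def)
      next
        case (Ed e) then show ?thesis
          using z by (auto simp: fun_ops a_def g_def y_def restrict_coords_def coords_def)
      next
        case (Lp j)
        show ?thesis
        proof (cases "j \<in> Lminus")
          case True
          then have "j \<notin> Lplus" "j \<in> V" using disj LmV by auto
          then show ?thesis using Lp True
            by (auto simp: fun_ops a_def g_def y_def restrict_coords_def coords_def c_def)
        next
          case False
          then show ?thesis using Lp z
            by (auto simp: fun_ops a_def g_def y_def restrict_coords_def coords_def)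
        qed
      qed
    qed
    have "z \<in> (\<lambda>w. a + w) ` (g ` (convex hull S))" using yS zf by auto
    also have "\<dots> = convex hull ((\<lambda>w. a + w) ` (g ` S))"
      by (simp add: convex_hull_linear_image[OF lin] convex_hull_translation)
    also have "\<dots> \<subseteq> PP V E Lminus Lplus"
      unfolding PP_def using fS by (rule hull_mono)
    finally show "z \<in> PP V E Lminus Lplus" .
  qed
qed

end
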